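(* Let $h:\mathbb{R}^n\to(-\infty,+\infty]$ be a proper lower semicontinuous convex function whose domain $\mathrm{dom}\,h$ is closed and bounded, let $\Omega\subseteq\mathbb{R}^n$ be a closed convex set with $\mathrm{dom}\,h\subseteq\Omega$, and let $D_h := \sup_{u_1,u_2\in\mathrm{dom}\,h}\|u_1-u_2\|$. Let $A_0=12$, $a_{k-1} = \frac{1+\sqrt{1+4A_{k-1}}}{2}$ and $A_k = A_{k-1}+a_{k-1}$ for $k\ge1$. Let $\lambda_0>0$ and $\bar\xi\ge 0$. Let $\{y_k\}_{k\ge0}\subseteq \mathrm{dom}\,h$, let $\{\lambda_k\}_{k\ge1}$ satisfy $0<\lambda_k\le\lambda_0$, let $\{\xi_k\}_{k\ge1}$ satisfy $0\le\xi_k\le\bar\xi$, and set $\tau_k = 2\xi_k\lambda_k/a_{k-1}$ for $k\ge1$. Let $x_0 = y_0$ and, for $k\ge1$, $$x_k = P_\Omega\!\left(\frac{(1+\tau_k)A_k}{a_{k-1}(\tau_k a_{k-1}+1)}\,y_k - \frac{A_{k-1}}{a_{k-1}(\tau_k a_{k-1}+1)}\,y_{k-1}\right),$$ where $P_\Omega$ denotes the Euclidean projection onto $\Omega$. Then for every $k\ge 0$, $$\|x_k - x_0\| \le C k, \qquad C := 2(2+\bar\xi\lambda_0)D_h.$$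
   Context: $\|\cdot\|$ is the Euclidean norm on $\mathbb{R}^n$. $\mathrm{dom}\,h=\{u: h(u)<+\infty\}$. *)

theory Defs
  imports "HOL-Analysis.Analysis"
begin

definition edom :: "('a \<Rightarrow> ereal) \<Rightarrow> 'a set" where
  "edom h = {u. h u < \<infinity>}"

definition proper_fun :: "('a \<Rightarrow> ereal) \<Rightarrow> bool" where
  "proper_fun h \<longleftrightarrow> (\<forall>u. h u \<noteq> -\<infinity>) \<and> edom h \<noteq> {}"

definition lsc_fun :: "('a::topological_space \<Rightarrow> ereal) \<Rightarrow> bool" where
  "lsc_fun h \<longleftrightarrow> (\<forall>x. \<forall>c. c < h x \<longrightarrow> (\<forall>\<^sub>F y in at x. c < h y))"

definition econvex_fun :: "('a::real_vector \<Rightarrow> ereal) \<Rightarrow> bool" where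
  "econvex_fun h \<longleftrightarrow> (\<forall>x y. \<forall>t::real. 0 < t \<and> t < 1 \<longrightarrow>
      h (t *\<^sub>R x + (1 - t) *\<^sub>R y) \<le> ereal t * h x + ereal (1 - t) * h y)"

fun Aseq :: "nat \<Rightarrow> real" where
  "Aseq 0 = 12"
| "Aseq (Suc k) = Aseq k + (1 + sqrt (1 + 4 * Aseq k)) / 2"

definition aseq :: "nat \<Rightarrow> real" where
  "aseq k = (1 + sqrt (1 + 4 * Aseq k)) / 2"

end

theory Submission
  imports Defs
begin

lemma Aseq_ge: "Aseq k \<ge> 12"
proof (induction k)
  case (Suc k)
  have "sqrt (1 + 4 * Aseq k) \<ge> 0" using Suc by simp
  hence "(1 + sqrt (1 + 4 * Aseq k)) / 2 \<ge> 0" by simp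
  moreover have "Aseq (Suc k) = Aseq k + (1 + sqrt (1 + 4 * Aseq k)) / 2" by simp
  ultimately show ?case using Suc by linarith
qed simp

lemma aseq_sq: "aseq k ^ 2 - aseq k = Aseq k"
proof -
  define s where "s = sqrt (1 + 4 * Aseq k)"
  have "s ^ 2 = 1 + 4 * Aseq k" unfolding s_def using Aseq_ge[of k] by simp
  thus ?thesis unfolding aseq_def s_def[symmetric] by (simp add: power2_eq_square field_simps)
qed

lemma Aseq_Suc: "Aseq (Suc k) = aseq k ^ 2"
  using aseq_sq[of k] by (simp add: aseq_def)

lemma aseq_ge1: "aseq k \<ge> 1"
proof -
  have "sqrt (1 + 4 * Aseq k) \<ge> 1" using Aseq_ge[of k] by simp
  thus ?thesis by (simp add: aseq_def)
qed

lemma aseq_le: "aseq k \<le> real k + 4"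
proof (induction k)
  case 0
  have "sqrt 49 = (7::real)" by (simp add: real_sqrt_unique)
  then show ?case by (simp add: aseq_def)
next
  case (Suc k)
  let ?a = "aseq k"
  have a: "?a \<ge> 1" by (rule aseq_ge1)
  have "sqrt (1 + 4 * ?a^2) \<le> sqrt ((1 + 2 * ?a)^2)"
    using a by (intro real_sqrt_le_mono) (simp add: power2_eq_square algebra_simps)
  also have "\<dots> = 1 + 2 * ?a" using a by simp
  finally have "aseq (Suc k) \<le> ?a + 1"
    unfolding aseq_def[of "Suc k"] Aseq_Suc by simp
  moreover have "Aseq (Suc k) = Aseq k + (1 + sqrt (1 + 4 * Aseq k)) / 2" by simp
  ultimately show ?case using Suc by linarith
qed

theorem lemma4p4:
  fixes h :: "real ^ 'n \<Rightarrow> ereal"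
    and \<Omega> :: "(real ^ 'n) set"
    and y x :: "nat \<Rightarrow> real ^ 'n"
    and lam \<xi> :: "nat \<Rightarrow> real"
    and lam0 \<xi>bar :: real
  assumes "proper_fun h" and "lsc_fun h" and "econvex_fun h"
    and "closed (edom h)" and "bounded (edom h)"
    and "closed \<Omega>" and "convex \<Omega>" and "edom h \<subseteq> \<Omega>"
    and "lam0 > 0" and "\<xi>bar \<ge> 0"
    and "\<And>k. y k \<in> edom h"
    and "\<And>k. k \<ge> 1 \<Longrightarrow> 0 < lam k \<and> lam k \<le> lam0"
    and "\<And>k. k \<ge> 1 \<Longrightarrow> 0 \<le> \<xi> k \<and> \<xi> k \<le> \<xi>bar"
    and "x 0 = y 0"
    and "\<And>k. k \<ge> 1 \<Longrightarrow>
          (let \<tau> = 2 * \<xi> k * lam k / aseq (k - 1) in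
           x k = closest_point \<Omega>
             (((1 + \<tau>) * Aseq k / (aseq (k - 1) * (\<tau> * aseq (k - 1) + 1))) *\<^sub>R y k
              - (Aseq (k - 1) / (aseq (k - 1) * (\<tau> * aseq (k - 1) + 1))) *\<^sub>R y (k - 1)))"
  shows "\<forall>k. norm (x k - x 0) \<le> 2 * (2 + \<xi>bar * lam0) * diameter (edom h) * real k"
proof
  fix k
  define D where "D = diameter (edom h)"
  have D0: "D \<ge> 0" unfolding D_def using assms(5) by (rule diameter_ge_0)
  have dist_y: "norm (y i - y j) \<le> D" for i j
    using diameter_bounded_bound[OF assms(5) assms(11)[of i] assms(11)[of j]]
    by (simp add: D_def dist_norm)
  have Cge: "4 \<le> 2 * (2 + \<xi>bar * lam0)" using assms(9,10) by simp
  show "norm (x k - x 0) \<le> 2 * (2 + \<xi>bar * lam0) * diameter (edom h) * real k"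
  proof (cases k)
    case 0
    then show ?thesis by simp
  next
    case (Suc m)
    define a where "a = aseq m"
    define \<tau> where "\<tau> = 2 * \<xi> k * lam k / a"
    have a1: "a \<ge> 1" unfolding a_def by (rule aseq_ge1)
    have tau0: "\<tau> \<ge> 0" unfolding \<tau>_def using assms(12,13)[of k] Suc a1 by simp
    have den: "\<tau> * a + 1 > 0" using tau0 a1 by (smt (verit) mult_nonneg_nonneg)
    define c where "c = (a - 1) / (\<tau> * a + 1)"
    have c0: "c \<ge> 0" unfolding c_def using a1 den by simp
    have cle: "c \<le> a - 1"
    proof -
      have "(a - 1) * 1 \<le> (a - 1) * (\<tau> * a + 1)"
        using a1 tau0 by (intro mult_left_mono) auto
      thus ?thesis using den by (simp add: c_def divide_le_eq)
    qed
    have c1: "(1 + \<tau>) * Aseq k / (a * (\<tau> * a + 1)) = 1 + c"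
    proof -
      have "Aseq k = a * a" unfolding Suc Aseq_Suc a_def by (simp add: power2_eq_square)
      hence "(1 + \<tau>) * Aseq k / (a * (\<tau> * a + 1)) = ((1 + \<tau>) * a) / (\<tau> * a + 1)"
        using a1 by simp
      also have "\<dots> = ((\<tau> * a + 1) + (a - 1)) / (\<tau> * a + 1)" by (simp add: algebra_simps)
      also have "\<dots> = (\<tau> * a + 1) / (\<tau> * a + 1) + (a - 1) / (\<tau> * a + 1)"
        by (rule add_divide_distrib)
      also have "\<dots> = 1 + c" using den unfolding c_def by simp
      finally show ?thesis .
    qed
    have c2: "Aseq m / (a * (\<tau> * a + 1)) = c"
    proof -
      have "Aseq m = a * (a - 1)" using aseq_sq[of m] unfolding a_def[symmetric]
        by (simp add: power2_eq_square algebra_simps)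
      moreover have "a \<noteq> 0" using a1 by simp
      ultimately show ?thesis unfolding c_def by simp
    qed
    define z where "z = y k + c *\<^sub>R (y k - y m)"
    have km: "k - 1 = m" using Suc by simp
    have k1: "k \<ge> 1" using Suc by simp
    have "x k = closest_point \<Omega>
             (((1 + \<tau>) * Aseq k / (a * (\<tau> * a + 1))) *\<^sub>R y k
              - (Aseq m / (a * (\<tau> * a + 1))) *\<^sub>R y m)"
      using assms(15)[OF k1] unfolding Let_def km a_def[symmetric] \<tau>_def[symmetric] .
    also have "\<dots> = closest_point \<Omega> ((1 + c) *\<^sub>R y k - c *\<^sub>R y m)"
      unfolding c1 c2 ..
    also have "(1 + c) *\<^sub>R y k - c *\<^sub>R y m = z" unfolding z_def by (simp add: algebra_simps)
    finally have xk: "x k = closest_point \<Omega> z" .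
    have y0: "y 0 \<in> \<Omega>" using assms(8,11) by blast
    have "norm (x k - x 0) = dist (closest_point \<Omega> z) (closest_point \<Omega> (y 0))"
      using xk assms(14) closest_point_self[OF y0] by (simp add: dist_norm)
    also have "\<dots> \<le> dist z (y 0)"
      using closest_point_lipschitz[OF assms(7,6)] y0 by blast
    also have "\<dots> = norm ((y k - y 0) + c *\<^sub>R (y k - y m))"
      by (simp add: z_def dist_norm algebra_simps)
    also have "\<dots> \<le> norm (y k - y 0) + c * norm (y k - y m)"
      using norm_triangle_ineq c0 by (metis abs_of_nonneg norm_scaleR)
    also have "\<dots> \<le> D + (a - 1) * D"
    proof -
      have "c * norm (y k - y m) \<le> (a - 1) * D"
        using dist_y[of k m] c0 cle D0 by (intro mult_mono) auto
      thus ?thesis using dist_y[of k 0] by linarith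
    qed
    also have "\<dots> = a * D" by (simp add: algebra_simps)
    also have "\<dots> \<le> (real m + 4) * D"
      using aseq_le[of m] D0 unfolding a_def by (simp add: mult_right_mono)
    also have "\<dots> \<le> 4 * real k * D" using D0 Suc by (simp add: mult_right_mono)
    also have "\<dots> \<le> 2 * (2 + \<xi>bar * lam0) * D * real k"
    proof -
      have "4 * (real k * D) \<le> 2 * (2 + \<xi>bar * lam0) * (real k * D)"
        using Cge D0 by (intro mult_right_mono) auto
      thus ?thesis by (simp add: algebra_simps)
    qed
    finally show ?thesis by (simp add: D_def)
  qed
qed

end
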